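(* Let $A\subseteq\mathbb{R}^n$ be a closed set supporting a doubling measure $\mu$, and let $f\colon A\to\mathbb{R}^m$ be Lipschitz. Then for $\mu$-almost every $a\in A$ the following holds: for all $(\hat A,\hat f)\in\mathrm{Tan}_{\mathbb{R}^n}(A,f,a)$ and all $b\in\hat A$, $$(\hat A-b,\ \hat f(\cdot+b)-\hat f(b))\in\mathrm{Tan}_{\mathbb{R}^n}(A,f,a).$$
   Context: A Radon measure $\mu$ on $A$ (with the Euclidean metric), finite and positive on balls of $A$, is doubling if $\mu(B(x,2r))\le C\mu(B(x,r))$ for all $x\in A$, $r>0$. For $A,B\subseteq\mathbb{R}^n$ and $R>0$, $d_R(A,B)=\max\{\sup_{a\in A\cap B(0,R)}\mathrm{dist}(a,B),\ \sup_{b\in B\cap B(0,R)}\mathrm{dist}(b,A)\}$; sets $A_j$ converge in the pointed Hausdorff sense to a closed set $\hat A$ if $d_R(A_j,\hat A)\to0$ for all $R>0$. For Lipschitz $f\colon A\to\mathbb{R}^m$ and $a\in A$, the pair $(\hat A,\hat f)$ is an intrinsic tangent of $(A,f)$ at $a$, written $(\hat A,\hat f)\in\mathrm{Tan}_{\mathbb{R}^n}(A,f,a)$, if there is a sequence $\lambda_j\to0^+$ such that $\lambda_j^{-1}(A-a)\to\hat A$ in the pointed Hausdorff sense and $\hat f\colon\hat A\to\mathbb{R}^m$ satisfies: whenever $x_j\in A$ and $\lambda_j^{-1}(x_j-a)\to x\in\hat A$, then $\lambda_j^{-1}(f(x_j)-f(a))\to\hat f(x)$. *)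

theory Defs
  imports "HOL-Analysis.Analysis"
begin

definition edist_set :: "'a::metric_space \<Rightarrow> 'a set \<Rightarrow> ennreal" where
  "edist_set x S = (if S = {} then \<infinity> else ennreal (infdist x S))"

text \<open>d_R(A,B); suprema over the empty set are 0 (ennreal convention).\<close>
definition dR :: "real \<Rightarrow> 'a::real_normed_vector set \<Rightarrow> 'a set \<Rightarrow> ennreal" where
  "dR R A B = max (SUP a\<in>A \<inter> ball 0 R. edist_set a B) (SUP b\<in>B \<inter> ball 0 R. edist_set b A)"

definition pointed_hausdorff_conv :: "(nat \<Rightarrow> 'a::real_normed_vector set) \<Rightarrow> 'a set \<Rightarrow> bool" where
  "pointed_hausdorff_conv As B \<longleftrightarrow> closed B \<and> (\<forall>R>0. (\<lambda>j. dR R (As j) B) \<longlonglongrightarrow> 0)"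

text \<open>Doubling measure on A: Borel measure on the ambient space concentrated on A
  (this is how a Radon measure on A is represented), finite and positive on balls
  centred in A, with the doubling inequality.\<close>
definition doubling_measure_on :: "'a::euclidean_space set \<Rightarrow> 'a measure \<Rightarrow> bool" where
  "doubling_measure_on A \<mu> \<longleftrightarrow>
     sets \<mu> = sets borel \<and> emeasure \<mu> (UNIV - A) = 0 \<and>
     (\<forall>x\<in>A. \<forall>r>0. 0 < emeasure \<mu> (ball x r) \<and> emeasure \<mu> (ball x r) < \<infinity>) \<and>
     (\<exists>C. \<forall>x\<in>A. \<forall>r>0. emeasure \<mu> (ball x (2*r)) \<le> ennreal C * emeasure \<mu> (ball x r))"

definition intrinsic_tangent ::
  "'a::euclidean_space set \<Rightarrow> ('a \<Rightarrow> 'b::euclidean_space) \<Rightarrow> 'a \<Rightarrow> 'a set \<Rightarrow> ('a \<Rightarrow> 'b) \<Rightarrow> bool" where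
  "intrinsic_tangent A f a Ahat fhat \<longleftrightarrow>
     (\<exists>lam :: nat \<Rightarrow> real. (\<forall>j. lam j > 0) \<and> lam \<longlonglongrightarrow> 0 \<and>
        pointed_hausdorff_conv (\<lambda>j. (\<lambda>y. (1 / lam j) *\<^sub>R (y - a)) ` A) Ahat \<and>
        (\<forall>xs x. (\<forall>j. xs j \<in> A) \<longrightarrow> x \<in> Ahat \<longrightarrow>
            (\<lambda>j. (1 / lam j) *\<^sub>R (xs j - a)) \<longlonglongrightarrow> x \<longrightarrow>
            (\<lambda>j. (1 / lam j) *\<^sub>R (f (xs j) - f a)) \<longlonglongrightarrow> fhat x))"

end

theory Submission
  imports Defs
begin

lemma edist_set_lessD:
  assumes "edist_set x S < ennreal \<rho>"
  shows "\<exists>s\<in>S. dist x s < \<rho>"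
proof -
  have ne: "S \<noteq> {}" using assms by (auto simp: edist_set_def)
  then have "ennreal (infdist x S) < ennreal \<rho>" using assms by (simp add: edist_set_def)
  then have "infdist x S < \<rho>" by (simp add: ennreal_less_iff[OF infdist_nonneg])
  then have "(INF s\<in>S. dist x s) < \<rho>" using ne by (simp add: infdist_notempty)
  then show ?thesis using ne by (subst (asm) cINF_less_iff) (auto intro: bdd_belowI[of _ 0])
qed

lemma edist_set_le: "s \<in> S \<Longrightarrow> edist_set x S \<le> ennreal (dist x s)"
  by (auto simp: edist_set_def intro!: ennreal_leI infdist_le)

lemma dR_ge1: "x \<in> X \<Longrightarrow> norm x < R \<Longrightarrow> edist_set x Y \<le> dR R X Y"
  unfolding dR_def by (rule order_trans[OF _ max.cobounded1]) (rule SUP_upper, auto)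

lemma dR_ge2: "y \<in> Y \<Longrightarrow> norm y < R \<Longrightarrow> edist_set y X \<le> dR R X Y"
  unfolding dR_def by (rule order_trans[OF _ max.cobounded2]) (rule SUP_upper, auto)

lemma dR_le: "(\<And>x. x\<in>X \<Longrightarrow> norm x < R \<Longrightarrow> edist_set x Y \<le> c) \<Longrightarrow>
   (\<And>y. y\<in>Y \<Longrightarrow> norm y < R \<Longrightarrow> edist_set y X \<le> c) \<Longrightarrow> dR R X Y \<le> c"
  unfolding dR_def by (auto intro!: SUP_least)

lemma norm4: "norm ((p::'a::real_normed_vector) - q - r + s) \<le> norm p + norm q + norm r + norm s"
proof -
  have "norm (p - q - r + s) \<le> norm (p - q - r) + norm s" by (rule norm_triangle_ineq)
  also have "norm (p - q - r) \<le> norm (p - q) + norm r" by (rule norm_triangle_ineq4)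
  also have "norm (p - q) \<le> norm p + norm q" by (rule norm_triangle_ineq4)
  finally show ?thesis by simp
qed

lemma norm3: "norm ((p::'a::real_normed_vector) - q + s) \<le> norm p + norm q + norm s"
  using norm4[of p q 0 s] by simp

definition good :: "'a::euclidean_space set \<Rightarrow> ('a \<Rightarrow> 'b::euclidean_space) \<Rightarrow> 'a \<Rightarrow> real \<Rightarrow> ('a \<times> 'b) set \<Rightarrow> real \<Rightarrow> real \<Rightarrow> bool" where
  "good A f a r D e R \<longleftrightarrow> (\<exists>\<theta>>0.
     (\<forall>x\<in>A. norm (x - a) \<le> (R + \<theta>) * r \<longrightarrow>
        (\<exists>qv\<in>D. norm ((1/r) *\<^sub>R (x - a) - fst qv) < e - \<theta> \<and> norm ((1/r) *\<^sub>R (f x - f a) - snd qv) < e - \<theta>)) \<and>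
     (\<forall>qv\<in>D. \<exists>x\<in>A. norm ((1/r) *\<^sub>R (x - a) - fst qv) < e - \<theta> \<and> norm ((1/r) *\<^sub>R (f x - f a) - snd qv) < e - \<theta>))"

lemma shift_S: "r > 0 \<Longrightarrow> norm ((1/r) *\<^sub>R (x - a') - q) \<le> norm ((1/r) *\<^sub>R (x - a) - q) + norm (a - a') / r"
proof -
  assume r: "r > 0"
  have "(1/r) *\<^sub>R (x - a') - q = ((1/r) *\<^sub>R (x - a) - q) + (1/r) *\<^sub>R (a - a')"
    by (simp add: algebra_simps)
  then have "norm ((1/r) *\<^sub>R (x - a') - q) \<le> norm ((1/r) *\<^sub>R (x - a) - q) + norm ((1/r) *\<^sub>R (a - a'))"
    by (metis norm_triangle_ineq)
  then show ?thesis using r by simp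
qed

lemma good_open:
  assumes lip: "L-lipschitz_on A f" and aA: "a \<in> A" and r: "r > 0" and g: "good A f a r D e R"
  shows "\<exists>\<rho>>0. \<forall>a'\<in>A. dist a' a < \<rho> \<longrightarrow> good A f a' r D e R"
proof -
  obtain \<theta> where th: "\<theta> > 0" and g1: "\<forall>x\<in>A. norm (x - a) \<le> (R + \<theta>) * r \<longrightarrow>
        (\<exists>qv\<in>D. norm ((1/r) *\<^sub>R (x - a) - fst qv) < e - \<theta> \<and> norm ((1/r) *\<^sub>R (f x - f a) - snd qv) < e - \<theta>)"
    and g2: "\<forall>qv\<in>D. \<exists>x\<in>A. norm ((1/r) *\<^sub>R (x - a) - fst qv) < e - \<theta> \<and> norm ((1/r) *\<^sub>R (f x - f a) - snd qv) < e - \<theta>"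
    using g unfolding good_def by blast
  have L0: "L \<ge> 0" using lip lipschitz_on_nonneg by blast
  define \<rho> where "\<rho> = \<theta> * r / (2 * (L + 1))"
  have rho: "\<rho> > 0" using th r L0 by (simp add: \<rho>_def)
  have rho1: "\<rho> \<le> \<theta> * r / 2" using th r L0 by (simp add: \<rho>_def field_simps)
  have rho2: "L * \<rho> \<le> \<theta> * r / 2" using th r L0 by (simp add: \<rho>_def field_simps)
  show ?thesis
  proof (intro exI[of _ \<rho>] conjI rho ballI impI)
    fix a' assume a'A: "a' \<in> A" and d: "dist a' a < \<rho>"
    have daa: "norm (a - a') < \<rho>" using d by (simp add: dist_norm norm_minus_commute)
    have S: "norm (a - a') / r \<le> \<theta>/2" using daa rho1 r by (simp add: field_simps)
    have fd: "norm (f a - f a') \<le> L * norm (a - a')"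
      using lipschitz_onD[OF lip aA a'A] by (simp add: dist_norm)
    have F: "norm (f a - f a') / r \<le> \<theta>/2"
    proof -
      have "L * norm (a - a') \<le> L * \<rho>" using daa L0 by (intro mult_left_mono) auto
      then show ?thesis using fd rho2 r by (simp add: field_simps)
    qed
    show "good A f a' r D e R"
      unfolding good_def
    proof (intro exI[of _ "\<theta>/2"] conjI ballI impI)
      show "\<theta>/2 > 0" using th by simp
    next
      fix x assume xA: "x \<in> A" and nx: "norm (x - a') \<le> (R + \<theta>/2) * r"
      have "norm (x - a) \<le> norm (x - a') + norm (a' - a)" by (rule norm_diff_triangle_le) auto
      also have "\<dots> \<le> (R + \<theta>) * r" using nx daa rho1 by (simp add: norm_minus_commute algebra_simps)
      finally obtain qv where qv: "qv \<in> D" "norm ((1/r) *\<^sub>R (x - a) - fst qv) < e - \<theta>"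
          "norm ((1/r) *\<^sub>R (f x - f a) - snd qv) < e - \<theta>" using g1 xA by blast
      show "\<exists>qv\<in>D. norm ((1/r) *\<^sub>R (x - a') - fst qv) < e - \<theta>/2 \<and> norm ((1/r) *\<^sub>R (f x - f a') - snd qv) < e - \<theta>/2"
        using qv shift_S[OF r, of x a' "fst qv" a] shift_S[OF r, of "f x" "f a'" "snd qv" "f a"] S F
        by (intro bexI[OF _ qv(1)]) linarith
    next
      fix qv assume qv: "qv \<in> D"
      then obtain x where x: "x \<in> A" "norm ((1/r) *\<^sub>R (x - a) - fst qv) < e - \<theta>"
          "norm ((1/r) *\<^sub>R (f x - f a) - snd qv) < e - \<theta>" using g2 by blast
      show "\<exists>x\<in>A. norm ((1/r) *\<^sub>R (x - a') - fst qv) < e - \<theta>/2 \<and> norm ((1/r) *\<^sub>R (f x - f a') - snd qv) < e - \<theta>/2"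
        using x shift_S[OF r, of x a' "fst qv" a] shift_S[OF r, of "f x" "f a'" "snd qv" "f a"] S F
        by (intro bexI[OF _ x(1)]) linarith
    qed
  qed
qed

definition Eset :: "'a::euclidean_space set \<Rightarrow> ('a \<Rightarrow> 'b::euclidean_space) \<Rightarrow> ('a \<times> 'b) set \<Rightarrow> real \<Rightarrow> real \<Rightarrow> real \<Rightarrow> 'a set" where
  "Eset A f D e R \<delta> = {a\<in>A. \<forall>r. 0 < r \<longrightarrow> r < \<delta> \<longrightarrow> \<not> good A f a r D e R}"

lemma Eset_closed:
  assumes "closed A" and lip: "L-lipschitz_on A f"
  shows "closed (Eset A f D e R \<delta>)"
  unfolding closed_def open_dist
proof (intro ballI)
  fix x assume "x \<in> - Eset A f D e R \<delta>"
  then consider "x \<notin> A" | r where "x \<in> A" "0 < r" "r < \<delta>" "good A f x r D e R"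
    unfolding Eset_def by blast
  then show "\<exists>\<epsilon>>0. \<forall>y. dist y x < \<epsilon> \<longrightarrow> y \<in> - Eset A f D e R \<delta>"
  proof cases
    case 1
    then have "x \<in> -A" by simp
    with \<open>closed A\<close> obtain \<epsilon> where "\<epsilon> > 0" "\<forall>y. dist y x < \<epsilon> \<longrightarrow> y \<in> -A"
      unfolding closed_def open_dist by blast
    then show ?thesis unfolding Eset_def by blast
  next
    case 2
    from good_open[OF lip 2(1,2,4)] obtain \<rho> where "\<rho> > 0" "\<forall>a'\<in>A. dist a' x < \<rho> \<longrightarrow> good A f a' r D e R"
      by blast
    then show ?thesis using 2 unfolding Eset_def by blast
  qed
qed

lemma emeasure_UN_countable_le:
  assumes X[measurable]: "\<And>i. i \<in> I \<Longrightarrow> X i \<in> sets M" and I: "countable I"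
  shows "emeasure M (\<Union>(X ` I)) \<le> (\<integral>\<^sup>+i. emeasure M (X i) \<partial>count_space I)"
proof -
  have U: "\<Union>(X ` I) \<in> sets M" using X I by (intro sets.countable_UN') auto
  have "emeasure M (\<Union>(X ` I)) = (\<integral>\<^sup>+x. indicator (\<Union>(X ` I)) x \<partial>M)"
    using U by simp
  also have "\<dots> \<le> (\<integral>\<^sup>+x. \<integral>\<^sup>+i. indicator (X i) x \<partial>count_space I \<partial>M)"
  proof (intro nn_integral_mono)
    fix x
    show "indicator (\<Union>(X ` I)) x \<le> (\<integral>\<^sup>+i. indicator (X i) x \<partial>count_space I :: ennreal)"
    proof (cases "x \<in> \<Union>(X ` I)")
      case True
      then obtain j where j: "j \<in> I" "x \<in> X j" by auto
      have "(\<integral>\<^sup>+i. indicator {j} i * indicator (X i) x \<partial>count_space I) = (\<Sum>i\<in>{j}. indicator {j} i * indicator (X i) x :: ennreal)"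
        using j by (intro nn_integral_count_space') auto
      also have "\<dots> = 1" using j by simp
      moreover have "(\<integral>\<^sup>+i. indicator {j} i * indicator (X i) x \<partial>count_space I) \<le> (\<integral>\<^sup>+i. indicator (X i) x \<partial>count_space I :: ennreal)"
        by (intro nn_integral_mono) (auto simp: indicator_def)
      ultimately have "1 \<le> (\<integral>\<^sup>+i. indicator (X i) x \<partial>count_space I :: ennreal)"
        by simp
      then show ?thesis using True by simp
    qed simp
  qed
  also have "\<dots> = (\<integral>\<^sup>+i. \<integral>\<^sup>+x. indicator (X i) x \<partial>M \<partial>count_space I)"
    by (rule nn_integral_count_space_nn_integral[OF I]) (auto intro: borel_measurable_indicator)
  also have "\<dots> = (\<integral>\<^sup>+i. emeasure M (X i) \<partial>count_space I)"
    by (intro nn_integral_cong) simp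
  finally show ?thesis .
qed

lemma doubling_iter:
  assumes C: "\<forall>x\<in>A. \<forall>r>0. emeasure \<mu> (ball x (2*r)) \<le> ennreal C * emeasure \<mu> (ball x r)"
    and x: "x \<in> A" and s: "s > 0"
  shows "emeasure \<mu> (ball x (2^m * s)) \<le> ennreal C ^ m * emeasure \<mu> (ball x s)"
proof (induction m)
  case 0 then show ?case by simp
next
  case (Suc m)
  have "emeasure \<mu> (ball x (2^Suc m * s)) = emeasure \<mu> (ball x (2 * (2^m * s)))" by (simp add: mult.assoc)
  also have "\<dots> \<le> ennreal C * emeasure \<mu> (ball x (2^m * s))" using C x s by simp
  also have "\<dots> \<le> ennreal C * (ennreal C ^ m * emeasure \<mu> (ball x s))"
    by (intro mult_left_mono Suc.IH) auto
  finally show ?case by (simp add: mult.assoc)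
qed

lemma porous_null:
  fixes A E :: "'a::euclidean_space set" and \<mu> :: "'a measure"
  assumes dm: "doubling_measure_on A \<mu>" and Ecl: "closed E" and EA: "E \<subseteq> A" and \<eta>: "0 < \<eta>" "\<eta> \<le> 1"
  shows "AE a in \<mu>. a \<in> E \<longrightarrow> (\<exists>\<delta>>0. \<forall>r. 0 < r \<longrightarrow> r < \<delta> \<longrightarrow> (\<forall>y\<in>A. dist y a < r \<longrightarrow> ball y (\<eta>*r) \<inter> E \<noteq> {}))"
proof -
  have sets: "sets \<mu> = sets borel" and fin: "\<forall>x\<in>A. \<forall>r>0. emeasure \<mu> (ball x r) < \<infinity>"
    using dm unfolding doubling_measure_on_def by auto
  obtain C where C: "\<forall>x\<in>A. \<forall>r>0. emeasure \<mu> (ball x (2*r)) \<le> ennreal C * emeasure \<mu> (ball x r)"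
    using dm unfolding doubling_measure_on_def by auto
  have space: "space \<mu> = UNIV" using sets_eq_imp_space_eq[OF sets] by simp
  note [measurable_cong] = sets
  have openS: "open S \<Longrightarrow> S \<in> sets \<mu>" for S using sets by simp
  define P where "P = {a\<in>E. \<forall>\<delta>>0. \<exists>r. 0<r \<and> r<\<delta> \<and> (\<exists>y\<in>A. dist y a < r \<and> ball y (\<eta>*r) \<inter> E = {})}"
  obtain m :: nat where m: "11/\<eta> < 2^m" using real_arch_pow[of 2 "11/\<eta>"] by auto
  define M where "M = ennreal C ^ m"
  have Mfin0: "M \<noteq> \<infinity>" unfolding M_def
    using power_eq_top_ennreal[of "ennreal C" m] by (simp add: infinity_ennreal_def)
  then have Mfin: "M < \<infinity>" by (simp add: infinity_ennreal_def top.not_eq_extremum)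
  have key: "\<exists>V\<in>sets \<mu>. P \<inter> ball 0 (real N) \<subseteq> V \<and> emeasure \<mu> V \<le> ennreal \<epsilon>" if \<epsilon>: "\<epsilon> > 0" for N :: nat and \<epsilon> :: real
  proof (cases "E = {}")
    case True
    then show ?thesis by (intro bexI[of _ "{}"]) (auto simp: P_def)
  next
    case Ene: False
    then obtain a0 where a0: "a0 \<in> E" by auto
    define B0 where "B0 = ball (0::'a) (real N + 1)"
    have "B0 \<subseteq> ball a0 (real N + 1 + norm a0)"
    proof
      fix x assume "x \<in> B0"
      then have "norm x < real N + 1" by (simp add: B0_def)
      then show "x \<in> ball a0 (real N + 1 + norm a0)"
        using norm_triangle_ineq4[of a0 x] by (simp add: dist_norm)
    qed
    then have "emeasure \<mu> B0 \<le> emeasure \<mu> (ball a0 (real N + 1 + norm a0))"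
      by (intro emeasure_mono openS) auto
    moreover have "emeasure \<mu> (ball a0 (real N + 1 + norm a0)) < \<infinity>"
    proof -
      have "real N + 1 + norm a0 > 0" by (simp add: add_pos_nonneg)
      moreover have "a0 \<in> A" using a0 EA by auto
      ultimately show ?thesis using fin by blast
    qed
    ultimately have B0fin: "emeasure \<mu> B0 \<noteq> \<infinity>" using neq_top_trans by (auto simp: top.not_eq_extremum)
    define W where "W k = ({x. infdist x E < 1 / Suc k} \<inter> B0) - E" for k :: nat
    have openI: "open {x::'a. infdist x E < c}" for c
      by (intro open_Collect_less continuous_intros)
    have Wsets: "W k \<in> sets \<mu>" for k
    proof -
      have Es: "E \<in> sets \<mu>" using Ecl by (simp add: sets borel_closed)
      show ?thesis unfolding W_def B0_def
        by (rule sets.Diff[OF sets.Int[OF openS[OF openI] openS[OF open_ball]] Es])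
    qed
    have Wdec: "decseq W"
      unfolding decseq_def W_def
    proof (intro allI impI subsetI)
      fix i j x assume ij: "i \<le> j" and "x \<in> ({x. infdist x E < 1 / Suc j} \<inter> B0) - E"
      moreover have "1 / real (Suc j) \<le> 1 / Suc i" using ij by (simp add: frac_le)
      ultimately show "x \<in> ({x. infdist x E < 1 / Suc i} \<inter> B0) - E" by auto
    qed
    have Wfin: "emeasure \<mu> (W k) \<noteq> \<infinity>" for k
    proof -
      have "emeasure \<mu> (W k) \<le> emeasure \<mu> B0"
        by (intro emeasure_mono openS) (auto simp: W_def B0_def)
      then show ?thesis using B0fin neq_top_trans[of "emeasure \<mu> B0" "emeasure \<mu> (W k)"]
        by (simp add: infinity_ennreal_def)
    qed
    have Wint: "(\<Inter>k. W k) = {}"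
    proof (rule ccontr)
      assume "(\<Inter>k. W k) \<noteq> {}"
      then obtain x where x: "\<And>k. x \<in> W k" by auto
      then have xE: "x \<notin> E" by (auto simp: W_def)
      have "infdist x E \<le> 0"
      proof (rule field_le_epsilon)
        fix e :: real assume "e > 0"
        then obtain k where "1 / real (Suc k) < e" by (metis nat_approx_posE)
        then show "infdist x E \<le> 0 + e" using x[of k] by (auto simp: W_def)
      qed
      then have "infdist x E = 0" using infdist_nonneg[of x E] by simp
      then show False using xE in_closed_iff_infdist_zero[OF Ecl Ene] by simp
    qed
    have "(\<lambda>k. emeasure \<mu> (W k)) \<longlonglongrightarrow> emeasure \<mu> (\<Inter>k. W k)"
      using Wsets Wdec Wfin by (intro Lim_emeasure_decseq) auto
    then have "(\<lambda>k. M * emeasure \<mu> (W k)) \<longlonglongrightarrow> M * 0"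
      using Wint Mfin by (intro ennreal_tendsto_cmult) (auto simp: infinity_ennreal_def)
    then have "eventually (\<lambda>k. M * emeasure \<mu> (W k) < ennreal \<epsilon>) sequentially"
      using \<epsilon> by (intro order_tendstoD(2)) auto
    then obtain k where k: "M * emeasure \<mu> (W k) < ennreal \<epsilon>"
      by (auto simp: eventually_sequentially)
    define \<delta> where "\<delta> = min (1 / (2 * Suc k)) (1/4)"
    have \<delta>: "\<delta> > 0" by (simp add: \<delta>_def)
    define K where "K = P \<inter> ball 0 (real N)"
    have "\<forall>a\<in>K. \<exists>r. 0<r \<and> r<\<delta> \<and> (\<exists>y\<in>A. dist y a < r \<and> ball y (\<eta>*r) \<inter> E = {})"
      using \<delta> by (auto simp: K_def P_def)
    then have "\<exists>rr. \<forall>a\<in>K. 0<rr a \<and> rr a<\<delta> \<and> (\<exists>y\<in>A. dist y a < rr a \<and> ball y (\<eta>*rr a) \<inter> E = {})"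
      by (rule bchoice)
    then obtain rr where rr1: "\<forall>a\<in>K. 0<rr a \<and> rr a<\<delta> \<and> (\<exists>y\<in>A. dist y a < rr a \<and> ball y (\<eta>*rr a) \<inter> E = {})"
      by (elim exE)
    then have "\<forall>a\<in>K. \<exists>y. 0<rr a \<and> rr a<\<delta> \<and> y\<in>A \<and> dist y a < rr a \<and> ball y (\<eta>*rr a) \<inter> E = {}"
      by blast
    then have "\<exists>yy. \<forall>a\<in>K. 0<rr a \<and> rr a<\<delta> \<and> yy a\<in>A \<and> dist (yy a) a < rr a \<and> ball (yy a) (\<eta>*rr a) \<inter> E = {}"
      by (rule bchoice)
    then obtain yy where ry0: "\<forall>a\<in>K. 0<rr a \<and> rr a<\<delta> \<and> yy a\<in>A \<and> dist (yy a) a < rr a \<and> ball (yy a) (\<eta>*rr a) \<inter> E = {}"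
      by (elim exE)
    have ry: "\<And>a. a \<in> K \<Longrightarrow> 0 < rr a \<and> rr a < \<delta> \<and> yy a \<in> A \<and> dist (yy a) a < rr a \<and> ball (yy a) (\<eta> * rr a) \<inter> E = {}"
      using ry0 by blast
    have coverK: "K \<subseteq> (\<Union>a\<in>K. ball (id a) (2 * rr a))"
    proof
      fix a assume aK: "a \<in> K"
      then have "a \<in> ball (id a) (2 * rr a)" using ry[OF aK] by simp
      then show "a \<in> (\<Union>a\<in>K. ball (id a) (2 * rr a))" by (rule UN_I[OF aK])
    qed
    obtain Cc where Cc: "countable Cc" "Cc \<subseteq> K"
      "pairwise (\<lambda>i j. disjnt (ball (id i) (2 * rr i)) (ball (id j) (2 * rr j))) Cc"
      "K \<subseteq> (\<Union>i\<in>Cc. ball (id i) (5 * (2 * rr i)))"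
    proof -
      have rB: "\<And>i. i \<in> K \<Longrightarrow> 0 < 2 * rr i \<and> 2 * rr i \<le> 1"
        using ry by (force simp: \<delta>_def)
      show ?thesis using Vitali_covering_lemma_balls[OF coverK rB] that by blast
    qed
    define V where "V = (\<Union>i\<in>Cc. ball i (5 * (2 * rr i)))"
    define H where "H i = ball (yy i) (\<eta> * rr i)" for i
    have Vsets: "V \<in> sets \<mu>" unfolding V_def by (intro openS) auto
    have HB: "H i \<subseteq> ball i (2 * rr i)" if "i \<in> K" for i
    proof
      fix z assume "z \<in> H i"
      then have d1: "dist (yy i) z < \<eta> * rr i" by (simp add: H_def)
      have e: "\<eta> * rr i \<le> rr i" using \<eta> ry[OF that] by simp
      have d3: "dist i z \<le> dist i (yy i) + dist (yy i) z" by (rule dist_triangle)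
      have d2: "dist i (yy i) < rr i" using ry[OF that] by (simp add: dist_commute)
      have "dist i z < 2 * rr i" using d1 d2 d3 e by linarith
      then show "z \<in> ball i (2 * rr i)" by simp
    qed
    have Hdisj: "disjoint_family_on H Cc"
      unfolding disjoint_family_on_def
    proof (intro ballI impI)
      fix i j assume ij: "i \<in> Cc" "j \<in> Cc" "i \<noteq> j"
      then have "disjnt (ball i (2 * rr i)) (ball j (2 * rr j))" using Cc(3) by (auto simp: pairwise_def)
      moreover have "H i \<subseteq> ball i (2 * rr i)" "H j \<subseteq> ball j (2 * rr j)" using HB ij Cc(2) by auto
      ultimately show "H i \<inter> H j = {}" by (auto simp: disjnt_def)
    qed
    have HW: "H i \<subseteq> W k" if iK: "i \<in> K" for i
    proof
      fix z assume zH: "z \<in> H i"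
      have zE: "z \<notin> E" using ry[OF iK] zH by (auto simp: H_def)
      have iE: "i \<in> E" and iN: "norm i < real N" using iK by (auto simp: K_def P_def)
      have dz: "dist i z < 2 * rr i" using HB[OF iK] zH by auto
      have rr: "2 * rr i \<le> 1 / Suc k" "2 * rr i \<le> 1/2" using ry[OF iK] by (auto simp: \<delta>_def field_simps)
      have "infdist z E \<le> dist z i" using iE by (rule infdist_le)
      then have "infdist z E < 1 / Suc k" using dz rr by (simp add: dist_commute)
      moreover have "norm z < real N + 1"
        using norm_triangle_sub[of z i] iN dz rr by (simp add: dist_norm norm_minus_commute)
      ultimately show "z \<in> W k" using zE by (simp add: W_def B0_def)
    qed
    have bigH: "emeasure \<mu> (ball i (5 * (2 * rr i))) \<le> M * emeasure \<mu> (H i)" if iK: "i \<in> K" for i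
    proof -
      have r: "0 < rr i" "yy i \<in> A" "dist (yy i) i < rr i" using ry[OF iK] by auto
      have h11: "11 * rr i < 2^m * (\<eta> * rr i)"
      proof -
        have "11 < 2^m * \<eta>" using m \<eta> by (simp add: field_simps)
        then show ?thesis using r by (simp add: mult.assoc[symmetric])
      qed
      have "ball i (5 * (2 * rr i)) \<subseteq> ball (yy i) (2^m * (\<eta> * rr i))"
      proof
        fix x assume "x \<in> ball i (5 * (2 * rr i))"
        then have "dist i x < 10 * rr i" by simp
        moreover have "dist (yy i) x \<le> dist (yy i) i + dist i x" by (rule dist_triangle)
        ultimately have "dist (yy i) x < 2^m * (\<eta> * rr i)" using r h11 by linarith
        then show "x \<in> ball (yy i) (2^m * (\<eta> * rr i))" by simp
      qed
      then have "emeasure \<mu> (ball i (5 * (2 * rr i))) \<le> emeasure \<mu> (ball (yy i) (2^m * (\<eta> * rr i)))"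
        by (intro emeasure_mono openS) auto
      also have "\<dots> \<le> M * emeasure \<mu> (H i)"
        unfolding M_def H_def using doubling_iter[OF C r(2), of "\<eta> * rr i" m] r \<eta> by simp
      finally show ?thesis .
    qed
    have "emeasure \<mu> V \<le> (\<integral>\<^sup>+i. emeasure \<mu> (ball i (5 * (2 * rr i))) \<partial>count_space Cc)"
      unfolding V_def by (intro emeasure_UN_countable_le Cc(1) openS) auto
    also have "\<dots> \<le> (\<integral>\<^sup>+i. M * emeasure \<mu> (H i) \<partial>count_space Cc)"
      using bigH Cc(2) by (intro nn_integral_mono) auto
    also have "\<dots> = M * (\<integral>\<^sup>+i. emeasure \<mu> (H i) \<partial>count_space Cc)"
      by (rule nn_integral_cmult) auto
    also have "(\<integral>\<^sup>+i. emeasure \<mu> (H i) \<partial>count_space Cc) = emeasure \<mu> (\<Union>(H ` Cc))"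
      using Hdisj Cc(1) by (intro emeasure_UN_countable[symmetric]) (auto simp: H_def[abs_def] intro: openS)
    also have "emeasure \<mu> (\<Union>(H ` Cc)) \<le> emeasure \<mu> (W k)"
      using HW Cc(2) Wsets by (intro emeasure_mono) auto
    finally have "emeasure \<mu> V \<le> M * emeasure \<mu> (W k)" by (auto simp: mult_left_mono)
    then have "emeasure \<mu> V \<le> ennreal \<epsilon>" using k by simp
    moreover have "P \<inter> ball 0 (real N) \<subseteq> V" using Cc(4) by (simp add: V_def K_def)
    ultimately show ?thesis using Vsets by blast
  qed
  have nullN: "AE a in \<mu>. a \<in> ball 0 (real N) \<longrightarrow> a \<notin> P" for N :: nat
  proof -
    have "\<forall>n::nat. \<exists>V\<in>sets \<mu>. P \<inter> ball 0 (real N) \<subseteq> V \<and> emeasure \<mu> V \<le> ennreal (1 / Suc n)"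
      using key[where N=N] by simp
    then obtain VV where VV: "\<And>n. VV n \<in> sets \<mu>" "\<And>n. P \<inter> ball 0 (real N) \<subseteq> VV n"
      "\<And>n. emeasure \<mu> (VV n) \<le> ennreal (1 / Suc n)" by metis
    define Z where "Z = (\<Inter>n. VV n)"
    have Zs: "Z \<in> sets \<mu>" using VV(1) by (auto simp: Z_def)
    have "emeasure \<mu> Z \<le> 0"
    proof (rule ennreal_le_epsilon)
      fix e :: real assume "0 < e"
      then obtain n where n: "1 / real (Suc n) < e" by (metis nat_approx_posE)
      have "emeasure \<mu> Z \<le> emeasure \<mu> (VV n)" using VV(1) by (intro emeasure_mono) (auto simp: Z_def)
      also have "\<dots> \<le> ennreal (1 / Suc n)" by (rule VV(3))
      also have "\<dots> \<le> ennreal e" using n by (intro ennreal_leI) simp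
      finally show "emeasure \<mu> Z \<le> 0 + ennreal e" by simp
    qed
    then have "Z \<in> null_sets \<mu>" using Zs by auto
    moreover have "{x \<in> space \<mu>. \<not> (x \<in> ball 0 (real N) \<longrightarrow> x \<notin> P)} \<subseteq> Z"
      using VV(2) by (fastforce simp: Z_def)
    ultimately show ?thesis by (rule AE_I')
  qed
  then have "AE a in \<mu>. \<forall>N::nat. a \<in> ball 0 (real N) \<longrightarrow> a \<notin> P"
    by (subst AE_all_countable) (intro allI nullN)
  then show ?thesis
  proof (rule eventually_mono)
    fix a assume H: "\<forall>N::nat. a \<in> ball 0 (real N) \<longrightarrow> a \<notin> P"
    obtain N :: nat where "norm a < real N" using reals_Archimedean2 by blast
    then have aP: "a \<notin> P" using H by auto
    show "a \<in> E \<longrightarrow> (\<exists>\<delta>>0. \<forall>r. 0 < r \<longrightarrow> r < \<delta> \<longrightarrow> (\<forall>y\<in>A. dist y a < r \<longrightarrow> ball y (\<eta>*r) \<inter> E \<noteq> {}))"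
    proof
      assume aE: "a \<in> E"
      from aP aE obtain \<delta> where "\<delta> > 0"
        "\<not> (\<exists>r. 0<r \<and> r<\<delta> \<and> (\<exists>y\<in>A. dist y a < r \<and> ball y (\<eta>*r) \<inter> E = {}))"
        unfolding P_def by blast
      then show "\<exists>\<delta>>0. \<forall>r. 0 < r \<longrightarrow> r < \<delta> \<longrightarrow> (\<forall>y\<in>A. dist y a < r \<longrightarrow> ball y (\<eta>*r) \<inter> E \<noteq> {})"
        by blast
    qed
  qed
qed

lemma tri3: "(u::'a::real_normed_vector) = p + q + s \<Longrightarrow> norm u \<le> norm p + norm q + norm s"
  using norm_triangle_ineq[of "p + q" s] norm_triangle_ineq[of p q] by simp

lemma tri4: "(u::'a::real_normed_vector) = p + q + s + t \<Longrightarrow> norm u \<le> norm p + norm q + norm s + norm t"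
  using norm_triangle_ineq[of "p + q + s" t] norm_triangle_ineq[of "p + q" s] norm_triangle_ineq[of p q] by simp

lemma tri2: "(u::'a::real_normed_vector) = p + q \<Longrightarrow> norm u \<le> norm p + norm q"
  using norm_triangle_ineq[of p q] by simp

lemma ev_ex: "eventually P sequentially \<Longrightarrow> (\<And>j. P j \<Longrightarrow> thesis) \<Longrightarrow> thesis"
  by (auto simp: eventually_sequentially)

lemma infdist_lessD:
  assumes "infdist x T < d" "T \<noteq> {}"
  shows "\<exists>t\<in>T. dist x t < d"
proof -
  have "(INF s\<in>T. dist x s) < d" using assms by (simp add: infdist_notempty)
  then show ?thesis using assms(2) by (subst (asm) cINF_less_iff) (auto intro: bdd_belowI[of _ 0])
qed

lemma finite_net:
  assumes "compact K" "\<rho> > 0"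
  shows "\<exists>N. finite N \<and> N \<subseteq> K \<and> K \<subseteq> (\<Union>z\<in>N. ball z \<rho>)"
proof -
  have "K \<subseteq> (\<Union>z\<in>K. ball z \<rho>)" using assms(2) by auto
  then obtain N where "N \<subseteq> K" "finite N" "K \<subseteq> (\<Union>z\<in>N. ball z \<rho>)"
    using compactE_image[OF assms(1), of K "\<lambda>z. ball z \<rho>"] by blast
  then show ?thesis by blast
qed

lemma finite_approx:
  fixes G :: "'a::euclidean_space \<Rightarrow> 'b::euclidean_space" and c :: 'a
  assumes K: "compact K" and G: "\<And>u u'. u\<in>K \<Longrightarrow> u'\<in>K \<Longrightarrow> norm (G u - G u') \<le> L * norm (u - u')"
    and L: "0 \<le> L" and \<tau>: "\<tau> > 0"
    and Q1: "\<And>X. open X \<Longrightarrow> X \<noteq> {} \<Longrightarrow> \<exists>d\<in>Q1. d \<in> X"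
    and Q2: "\<And>X. open X \<Longrightarrow> X \<noteq> {} \<Longrightarrow> \<exists>d\<in>Q2. d \<in> X"
  shows "\<exists>D. finite D \<and> D \<subseteq> Q1 \<times> Q2 \<and>
     (\<forall>qv\<in>D. \<exists>u\<in>K. norm (u - c - fst qv) < \<tau> \<and> norm (G u - snd qv) < \<tau>) \<and>
     (\<forall>u\<in>K. \<exists>qv\<in>D. norm (u - c - fst qv) < \<tau> \<and> norm (G u - snd qv) < \<tau>)"
proof -
  define \<rho> where "\<rho> = \<tau> / (2 * (L + 1))"
  have \<rho>: "\<rho> > 0" "2 * \<rho> \<le> \<tau>" "L * \<rho> < \<tau> / 2"
    using \<tau> L by (auto simp: \<rho>_def field_simps)
  obtain N where N: "finite N" "N \<subseteq> K" "K \<subseteq> (\<Union>z\<in>N. ball z \<rho>)"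
    using finite_net[OF K \<rho>(1)] by blast
  have "\<forall>z\<in>N. \<exists>q\<in>Q1. q \<in> ball (z - c) \<rho>" using Q1[of "ball (_ - c) \<rho>"] \<rho> by auto
  then obtain qf where qf: "\<forall>z\<in>N. qf z \<in> Q1 \<and> qf z \<in> ball (z - c) \<rho>" by metis
  have "\<forall>z\<in>N. \<exists>v\<in>Q2. v \<in> ball (G z) (\<tau>/2)" using Q2[of "ball (G _) (\<tau>/2)"] \<tau> by auto
  then obtain vf where vf: "\<forall>z\<in>N. vf z \<in> Q2 \<and> vf z \<in> ball (G z) (\<tau>/2)" by metis
  define D where "D = (\<lambda>z. (qf z, vf z)) ` N"
  show ?thesis
  proof (intro exI[of _ D] conjI ballI)
    show "finite D" using N by (simp add: D_def)
    show "D \<subseteq> Q1 \<times> Q2" using qf vf by (auto simp: D_def)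
  next
    fix qv assume "qv \<in> D"
    then obtain z where z: "z \<in> N" "qv = (qf z, vf z)" by (auto simp: D_def)
    have "norm (z - c - qf z) < \<tau>" using qf z \<rho> by (auto simp: dist_norm norm_minus_commute)
    moreover have "norm (G z - vf z) < \<tau>" using vf z \<tau> by (auto simp: dist_norm)
    ultimately show "\<exists>u\<in>K. norm (u - c - fst qv) < \<tau> \<and> norm (G u - snd qv) < \<tau>"
      using z N(2) by auto
  next
    fix u assume uK: "u \<in> K"
    then obtain z where z: "z \<in> N" "dist z u < \<rho>" using N(3) by auto
    have zK: "z \<in> K" using z N(2) by auto
    have d1: "norm (z - c - qf z) < \<rho>" using qf z by (auto simp: dist_norm norm_minus_commute)
    have "norm (u - c - qf z) \<le> norm (u - z) + norm (z - c - qf z)" by (rule tri2) simp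
    also have "\<dots> < \<tau>"
    proof -
      have "norm (u - z) < \<rho>" using z(2) by (simp add: dist_norm norm_minus_commute)
      then show ?thesis using d1 \<rho> by linarith
    qed
    finally have e1: "norm (u - c - qf z) < \<tau>" .
    have d2: "norm (G z - vf z) < \<tau>/2" using vf z by (auto simp: dist_norm)
    have "norm (G u - vf z) \<le> norm (G u - G z) + norm (G z - vf z)" by (rule tri2) simp
    also have "norm (G u - G z) \<le> L * norm (u - z)" using G[OF uK zK] .
    also have "L * norm (u - z) \<le> L * \<rho>" using z(2) L by (intro mult_left_mono) (auto simp: dist_norm norm_minus_commute)
    finally have e2: "norm (G u - vf z) < \<tau>" using d2 \<rho> by simp
    show "\<exists>qv\<in>D. norm (u - c - fst qv) < \<tau> \<and> norm (G u - snd qv) < \<tau>"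
      using e1 e2 z(1) by (auto simp: D_def)
  qed
qed

locale tsetup =
  fixes A :: "'a::euclidean_space set" and f :: "'a \<Rightarrow> 'b::euclidean_space" and a :: 'a and L :: real
    and lam :: "nat \<Rightarrow> real" and Ahat :: "'a set" and fhat :: "'a \<Rightarrow> 'b"
  assumes aA: "a \<in> A" and lip: "L-lipschitz_on A f"
    and lam_pos: "\<And>j. lam j > 0" and lam0: "lam \<longlonglongrightarrow> 0"
    and phc: "pointed_hausdorff_conv (\<lambda>j. (\<lambda>y. (1 / lam j) *\<^sub>R (y - a)) ` A) Ahat"
    and fc: "\<And>xs x. (\<forall>j. xs j \<in> A) \<Longrightarrow> x \<in> Ahat \<Longrightarrow> (\<lambda>j. (1 / lam j) *\<^sub>R (xs j - a)) \<longlonglongrightarrow> x \<Longrightarrow>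
              (\<lambda>j. (1 / lam j) *\<^sub>R (f (xs j) - f a)) \<longlonglongrightarrow> fhat x"
begin

definition S where "S j x = (1 / lam j) *\<^sub>R (x - a)"
definition F where "F j x = (1 / lam j) *\<^sub>R (f x - f a)"

lemma L0: "0 \<le> L" using lip lipschitz_on_nonneg by blast

lemma closedAhat: "closed Ahat" using phc by (simp add: pointed_hausdorff_conv_def)

lemma SA_ne: "S j ` A \<noteq> {}" using aA by auto

lemma dR_ev:
  assumes "R > 0" "\<rho> > 0"
  shows "eventually (\<lambda>j. dR R (S j ` A) Ahat < ennreal \<rho>) sequentially"
proof -
  have "(\<lambda>j. dR R (S j ` A) Ahat) \<longlonglongrightarrow> 0"
    using phc assms(1) by (simp add: pointed_hausdorff_conv_def S_def[abs_def])
  then show ?thesis using assms(2) by (intro order_tendstoD(2)) auto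
qed

lemma FS_lip:
  assumes "y \<in> A" "y' \<in> A"
  shows "norm (F j y - F j y') \<le> L * norm (S j y - S j y')"
proof -
  have l: "lam j > 0" by (rule lam_pos)
  have "F j y - F j y' = (1 / lam j) *\<^sub>R (f y - f y')" by (simp add: F_def algebra_simps)
  then have "norm (F j y - F j y') = norm (f y - f y') / lam j" using l by simp
  also have "\<dots> \<le> L * norm (y - y') / lam j"
    using lipschitz_onD[OF lip assms] l by (intro divide_right_mono) (auto simp: dist_norm)
  also have "S j y - S j y' = (1 / lam j) *\<^sub>R (y - y')" by (simp add: S_def algebra_simps)
  then have "L * norm (y - y') / lam j = L * norm (S j y - S j y')" using l by simp
  finally show ?thesis .
qed

lemma infdist_ev:
  assumes "x \<in> Ahat" "\<rho> > 0"
  shows "eventually (\<lambda>j. infdist x (S j ` A) < \<rho>) sequentially"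
proof -
  have "norm x + 1 > 0" by (simp add: add_nonneg_pos)
  from dR_ev[OF this assms(2)] show ?thesis
  proof (rule eventually_mono)
    fix j assume "dR (norm x + 1) (S j ` A) Ahat < ennreal \<rho>"
    moreover have "edist_set x (S j ` A) \<le> dR (norm x + 1) (S j ` A) Ahat"
      using assms(1) by (intro dR_ge2) auto
    ultimately have "ennreal (infdist x (S j ` A)) < ennreal \<rho>"
      using SA_ne by (simp add: edist_set_def)
    then show "infdist x (S j ` A) < \<rho>" by (simp add: ennreal_less_iff[OF infdist_nonneg])
  qed
qed

lemma approx_ev:
  assumes x: "x \<in> Ahat" and \<rho>: "\<rho> > 0"
  shows "eventually (\<lambda>j. \<exists>y\<in>A. norm (S j y - x) < \<rho> \<and> norm (F j y - fhat x) < \<rho>) sequentially"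
proof -
  have "\<forall>j. \<exists>y\<in>A. dist x (S j y) < infdist x (S j ` A) + 1 / Suc j"
  proof
    fix j
    have "infdist x (S j ` A) < infdist x (S j ` A) + 1 / Suc j" by simp
    then show "\<exists>y\<in>A. dist x (S j y) < infdist x (S j ` A) + 1 / Suc j"
      using infdist_lessD[OF _ SA_ne] by blast
  qed
  then obtain ys where ys: "\<And>j. ys j \<in> A" "\<And>j. dist x (S j (ys j)) < infdist x (S j ` A) + 1 / Suc j"
    by metis
  have conv: "(\<lambda>j. S j (ys j)) \<longlonglongrightarrow> x"
    unfolding tendsto_iff
  proof (intro allI impI)
    fix e :: real assume e: "e > 0"
    obtain N :: nat where N: "1 / Suc N < e/2" using e by (metis half_gt_zero nat_approx_posE)
    have "eventually (\<lambda>j. infdist x (S j ` A) < e/2) sequentially"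
      using infdist_ev[OF x, of "e/2"] e by simp
    moreover have "eventually (\<lambda>j. 1 / real (Suc j) < e/2) sequentially"
      unfolding eventually_sequentially
    proof (intro exI allI impI)
      fix j assume "N \<le> j"
      then have "1 / real (Suc j) \<le> 1 / Suc N" by (simp add: frac_le)
      then show "1 / real (Suc j) < e/2" using N by linarith
    qed
    ultimately show "eventually (\<lambda>j. dist (S j (ys j)) x < e) sequentially"
    proof (rule eventually_elim2)
      fix j assume "infdist x (S j ` A) < e/2" "1 / real (Suc j) < e/2"
      then show "dist (S j (ys j)) x < e" using ys(2)[of j] by (simp add: dist_commute)
    qed
  qed
  have "(\<lambda>j. F j (ys j)) \<longlonglongrightarrow> fhat x"
    using fc[of ys x] ys(1) x conv by (simp add: S_def[abs_def] F_def[abs_def])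
  then have "eventually (\<lambda>j. dist (F j (ys j)) (fhat x) < \<rho>) sequentially"
    using \<rho> by (simp add: tendsto_iff)
  moreover have "eventually (\<lambda>j. dist (S j (ys j)) x < \<rho>) sequentially"
    using conv \<rho> by (simp add: tendsto_iff)
  ultimately show ?thesis
  proof (rule eventually_elim2)
    fix j assume "dist (F j (ys j)) (fhat x) < \<rho>" "dist (S j (ys j)) x < \<rho>"
    then show "\<exists>y\<in>A. norm (S j y - x) < \<rho> \<and> norm (F j y - fhat x) < \<rho>"
      using ys(1)[of j] by (auto simp: dist_norm)
  qed
qed

lemma fhat_lip:
  assumes x: "x \<in> Ahat" and x': "x' \<in> Ahat"
  shows "norm (fhat x - fhat x') \<le> L * norm (x - x')"
proof (rule field_le_epsilon)
  fix e :: real assume e: "e > 0"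
  define \<rho> where "\<rho> = e / (2 + 2 * L)"
  have \<rho>: "\<rho> > 0" "(2 + 2 * L) * \<rho> = e" using e L0 by (auto simp: \<rho>_def)
  have "eventually (\<lambda>j. (\<exists>y\<in>A. norm (S j y - x) < \<rho> \<and> norm (F j y - fhat x) < \<rho>) \<and>
           (\<exists>y\<in>A. norm (S j y - x') < \<rho> \<and> norm (F j y - fhat x') < \<rho>)) sequentially"
    using approx_ev[OF x \<rho>(1)] approx_ev[OF x' \<rho>(1)] by (rule eventually_conj)
  then obtain j where "(\<exists>y\<in>A. norm (S j y - x) < \<rho> \<and> norm (F j y - fhat x) < \<rho>) \<and>
           (\<exists>y\<in>A. norm (S j y - x') < \<rho> \<and> norm (F j y - fhat x') < \<rho>)"
    by (rule ev_ex)
  then obtain y y' where y: "y \<in> A" "norm (S j y - x) < \<rho>" "norm (F j y - fhat x) < \<rho>"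
    and y': "y' \<in> A" "norm (S j y' - x') < \<rho>" "norm (F j y' - fhat x') < \<rho>" by blast
  have "norm (S j y - S j y') \<le> norm (S j y - x) + norm (x - x') + norm (x' - S j y')"
    by (rule tri3) simp
  also have "\<dots> \<le> norm (x - x') + 2 * \<rho>" using y y' by (simp add: norm_minus_commute)
  finally have sy: "norm (S j y - S j y') \<le> norm (x - x') + 2 * \<rho>" .
  have "norm (fhat x - fhat x') \<le> norm (fhat x - F j y) + norm (F j y - F j y') + norm (F j y' - fhat x')"
    by (rule tri3) simp
  also have "norm (F j y - F j y') \<le> L * norm (S j y - S j y')" by (rule FS_lip[OF y(1) y'(1)])
  also have "\<dots> \<le> L * (norm (x - x') + 2 * \<rho>)" using sy L0 by (rule mult_left_mono)
  finally have "norm (fhat x - fhat x') \<le> L * norm (x - x') + (2 + 2 * L) * \<rho>"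
    using y y' by (simp add: norm_minus_commute algebra_simps)
  then show "norm (fhat x - fhat x') \<le> L * norm (x - x') + e" using \<rho> by simp
qed

end

context tsetup begin

lemma upper_ev:
  assumes R1: "0 \<le> R1" and \<sigma>: "\<sigma> > 0"
  shows "eventually (\<lambda>j. \<forall>x\<in>A. norm (S j x) \<le> R1 \<longrightarrow>
           (\<exists>z\<in>Ahat. norm (S j x - z) < \<sigma> \<and> norm (F j x - fhat z) < \<sigma>)) sequentially"
proof -
  define \<rho> where "\<rho> = \<sigma> / (8 * (L + 1))"
  have \<rho>0: "\<rho> > 0" using \<sigma> L0 by (simp add: \<rho>_def)
  have L1: "L + 1 > 0" using L0 by simp
  have "8 * (L + 1) * \<rho> = \<sigma>" using L1 by (simp add: \<rho>_def)
  then have eq: "\<sigma> = 8 * (L * \<rho>) + 8 * \<rho>" by (simp add: algebra_simps)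
  have Lr: "L * \<rho> \<ge> 0" using L0 \<rho>0 by simp
  have \<rho>: "\<rho> > 0" "2 * \<rho> < \<sigma>" "L * (3 * \<rho>) + \<rho> < \<sigma>"
    using \<rho>0 eq Lr by (auto simp: algebra_simps)
  define K where "K = Ahat \<inter> cball 0 (R1 + \<rho>)"
  have cK: "compact K" unfolding K_def using closedAhat by (intro closed_Int_compact) auto
  obtain N where N: "finite N" "N \<subseteq> K" "K \<subseteq> (\<Union>z\<in>N. ball z \<rho>)"
    using finite_net[OF cK \<rho>0] by (elim exE conjE)
  have NA: "z \<in> Ahat" if "z \<in> N" for z using N(2) that unfolding K_def by blast
  have ev1: "eventually (\<lambda>j. \<forall>z\<in>N. \<exists>y\<in>A. norm (S j y - z) < \<rho> \<and> norm (F j y - fhat z) < \<rho>) sequentially"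
    using N(1) by (intro eventually_ball_finite ballI approx_ev NA \<rho>(1))
  have ev2: "eventually (\<lambda>j. dR (R1 + 1) (S j ` A) Ahat < ennreal \<rho>) sequentially"
    using R1 \<rho> by (intro dR_ev) auto
  from ev1 ev2 show ?thesis
  proof (rule eventually_elim2)
    fix j
    assume e1: "\<forall>z\<in>N. \<exists>y\<in>A. norm (S j y - z) < \<rho> \<and> norm (F j y - fhat z) < \<rho>"
      and e2: "dR (R1 + 1) (S j ` A) Ahat < ennreal \<rho>"
    show "\<forall>x\<in>A. norm (S j x) \<le> R1 \<longrightarrow> (\<exists>z\<in>Ahat. norm (S j x - z) < \<sigma> \<and> norm (F j x - fhat z) < \<sigma>)"
    proof (intro ballI impI)
      fix x assume xA: "x \<in> A" and nx: "norm (S j x) \<le> R1"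
      have "edist_set (S j x) Ahat \<le> dR (R1 + 1) (S j ` A) Ahat"
        using xA nx by (intro dR_ge1) auto
      then have "edist_set (S j x) Ahat < ennreal \<rho>" using e2 by simp
      then obtain xh where xh: "xh \<in> Ahat" "dist (S j x) xh < \<rho>" using edist_set_lessD by blast
      have "norm xh \<le> norm (S j x) + norm (xh - S j x)" by (rule tri2) simp
      then have "norm xh \<le> R1 + \<rho>" using nx xh(2) by (simp add: dist_norm norm_minus_commute)
      then have "xh \<in> K" using xh(1) by (simp add: K_def)
      then obtain z where z: "z \<in> N" "dist z xh < \<rho>" using N(3) by auto
      obtain y where y: "y \<in> A" "norm (S j y - z) < \<rho>" "norm (F j y - fhat z) < \<rho>"
        using e1 z(1) by blast
      have n1: "norm (S j x - xh) < \<rho>" using xh(2) by (simp add: dist_norm)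
      have n2: "norm (xh - z) < \<rho>" using z(2) by (simp add: dist_norm norm_minus_commute)
      have "norm (S j x - z) \<le> norm (S j x - xh) + norm (xh - z)" by (rule tri2) simp
      then have s1: "norm (S j x - z) < \<sigma>" using n1 n2 \<rho>(2) by linarith
      have "norm (S j x - S j y) \<le> norm (S j x - xh) + norm (xh - z) + norm (z - S j y)" by (rule tri3) simp
      then have "norm (S j x - S j y) \<le> 3 * \<rho>" using n1 n2 y(2) by (simp add: norm_minus_commute)
      then have "L * norm (S j x - S j y) \<le> L * (3 * \<rho>)" using L0 by (rule mult_left_mono)
      moreover have "norm (F j x - fhat z) \<le> norm (F j x - F j y) + norm (F j y - fhat z)" by (rule tri2) simp
      moreover have "norm (F j x - F j y) \<le> L * norm (S j x - S j y)" by (rule FS_lip[OF xA y(1)])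
      ultimately have "norm (F j x - fhat z) < \<sigma>" using y(3) \<rho>(3) by linarith
      then show "\<exists>z\<in>Ahat. norm (S j x - z) < \<sigma> \<and> norm (F j x - fhat z) < \<sigma>"
        using s1 NA[OF z(1)] by blast
    qed
  qed
qed

end

context tsetup begin

lemma normS: "norm (S j x) = norm (x - a) / lam j"
  using lam_pos[of j] by (simp add: S_def)

lemma S_diff: "S j x - S j z = (1 / lam j) *\<^sub>R (x - z)"
  by (simp add: S_def algebra_simps)

lemma F_diff: "F j x - F j z = (1 / lam j) *\<^sub>R (f x - f z)"
  by (simp add: F_def algebra_simps)

lemma step_k:
  fixes D :: "('a \<times> 'b) set" and e R \<delta>0 :: real and b :: 'a
  assumes bA: "b \<in> Ahat" and Dfin: "finite D" and e: "0 < e" "e \<le> 1" and R: "0 \<le> R" and \<delta>0: "\<delta>0 > 0"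
    and D1: "\<forall>qv\<in>D. \<exists>u\<in>Ahat. norm (u - b - fst qv) < e/8 \<and> norm (fhat u - fhat b - snd qv) < e/8"
    and D2: "\<forall>u\<in>Ahat. norm (u - b) \<le> R + 1 \<longrightarrow> (\<exists>qv\<in>D. norm (u - b - fst qv) < e/8 \<and> norm (fhat u - fhat b - snd qv) < e/8)"
    and NP: "\<And>h::nat. a \<in> Eset A f D e R \<delta>0 \<Longrightarrow> \<exists>\<delta>>0. \<forall>r. 0 < r \<longrightarrow> r < \<delta> \<longrightarrow>
               (\<forall>y\<in>A. dist y a < r \<longrightarrow> ball y ((1 / Suc h) * r) \<inter> Eset A f D e R \<delta>0 \<noteq> {})"
  shows "\<exists>r. 0 < r \<and> r < \<delta>0 \<and> good A f a r D e R"
proof (rule ccontr)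
  assume nex: "\<not> (\<exists>r. 0 < r \<and> r < \<delta>0 \<and> good A f a r D e R)"
  define E where "E = Eset A f D e R \<delta>0"
  have aE: "a \<in> E" using nex aA by (auto simp: E_def Eset_def)
  define L1 where "L1 = L + 1"
  have L1: "L1 > 0" "L \<le> L1" "1 \<le> L1" using L0 by (auto simp: L1_def)
  define \<eta> where "\<eta> = e / (16 * L1)"
  define \<tau> where "\<tau> = e / 8"
  define \<theta> where "\<theta> = e / 8"
  have \<eta>0: "\<eta> > 0" using e L1 by (simp add: \<eta>_def)
  have \<eta>eq: "16 * L1 * \<eta> = e" using L1 by (simp add: \<eta>_def)
  have \<eta>1: "16 * \<eta> \<le> e"
  proof -
    have "16 * \<eta> \<le> 16 * L1 * \<eta>" using L1 \<eta>0 by simp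
    then show ?thesis using \<eta>eq by simp
  qed
  have \<eta>2: "L * (2 * \<eta>) \<le> e / 8"
  proof -
    have "L * (2 * \<eta>) \<le> L1 * (2 * \<eta>)" using L1 \<eta>0 by (intro mult_right_mono) auto
    then show ?thesis using \<eta>eq by simp
  qed
  have NB: "norm b + 1 > 0" by (simp add: add_nonneg_pos)
  obtain h :: nat where h0: "1 / real (Suc h) < \<eta> / (2 * (norm b + 1))"
    using \<eta>0 NB by (metis divide_pos_pos nat_approx_posE zero_less_mult_iff zero_less_numeral)
  have h: "(1 / Suc h) * (norm b + 1) < \<eta> / 2"
    using h0 NB by (simp add: field_simps)
  obtain \<delta>p where \<delta>p: "\<delta>p > 0" "\<forall>r. 0 < r \<longrightarrow> r < \<delta>p \<longrightarrow> (\<forall>y\<in>A. dist y a < r \<longrightarrow> ball y ((1 / Suc h) * r) \<inter> E \<noteq> {})"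
    using NP[of h] aE unfolding E_def by blast
  have "\<forall>qv\<in>D. \<exists>u. u \<in> Ahat \<and> norm (u - b - fst qv) < \<tau> \<and> norm (fhat u - fhat b - snd qv) < \<tau>"
    using D1 unfolding \<tau>_def by blast
  then have "\<exists>uu. \<forall>qv\<in>D. uu qv \<in> Ahat \<and> norm (uu qv - b - fst qv) < \<tau> \<and> norm (fhat (uu qv) - fhat b - snd qv) < \<tau>"
    by (rule bchoice)
  then obtain uu where uu: "\<forall>qv\<in>D. uu qv \<in> Ahat \<and> norm (uu qv - b - fst qv) < \<tau> \<and> norm (fhat (uu qv) - fhat b - snd qv) < \<tau>"
    by (elim exE)
  define R1 where "R1 = norm b + R + 2"
  have "min \<delta>0 (\<delta>p / (norm b + 1)) > 0" using \<delta>0 \<delta>p NB by simp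
  then have ev1: "eventually (\<lambda>j. lam j < min \<delta>0 (\<delta>p / (norm b + 1))) sequentially"
    using lam0 by (intro order_tendstoD(2))
  have ev2: "eventually (\<lambda>j. \<exists>y\<in>A. norm (S j y - b) < min 1 (\<eta>/2) \<and> norm (F j y - fhat b) < min 1 (\<eta>/2)) sequentially"
    using \<eta>0 by (intro approx_ev bA) simp
  have ev3: "eventually (\<lambda>j. \<forall>x\<in>A. norm (S j x) \<le> R1 \<longrightarrow>
           (\<exists>z\<in>Ahat. norm (S j x - z) < \<eta> \<and> norm (F j x - fhat z) < \<eta>)) sequentially"
    using R \<eta>0 by (intro upper_ev) (auto simp: R1_def)
  have ev4: "eventually (\<lambda>j. \<forall>qv\<in>D. \<exists>x\<in>A. norm (S j x - uu qv) < \<eta> \<and> norm (F j x - fhat (uu qv)) < \<eta>) sequentially"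
  proof (intro eventually_ball_finite Dfin ballI)
    fix qv assume "qv \<in> D"
    then have "uu qv \<in> Ahat" using uu by blast
    then show "eventually (\<lambda>j. \<exists>x\<in>A. norm (S j x - uu qv) < \<eta> \<and> norm (F j x - fhat (uu qv)) < \<eta>) sequentially"
      using approx_ev \<eta>0 by blast
  qed
  have "eventually (\<lambda>j. lam j < min \<delta>0 (\<delta>p / (norm b + 1)) \<and>
      (\<exists>y\<in>A. norm (S j y - b) < min 1 (\<eta>/2) \<and> norm (F j y - fhat b) < min 1 (\<eta>/2)) \<and>
      (\<forall>x\<in>A. norm (S j x) \<le> R1 \<longrightarrow> (\<exists>z\<in>Ahat. norm (S j x - z) < \<eta> \<and> norm (F j x - fhat z) < \<eta>)) \<and>
      (\<forall>qv\<in>D. \<exists>x\<in>A. norm (S j x - uu qv) < \<eta> \<and> norm (F j x - fhat (uu qv)) < \<eta>)) sequentially"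
    using ev1 ev2 ev3 ev4 by (intro eventually_conj)
  then obtain j where j1: "lam j < min \<delta>0 (\<delta>p / (norm b + 1))"
    and j2: "\<exists>y\<in>A. norm (S j y - b) < min 1 (\<eta>/2) \<and> norm (F j y - fhat b) < min 1 (\<eta>/2)"
    and j3: "\<forall>x\<in>A. norm (S j x) \<le> R1 \<longrightarrow> (\<exists>z\<in>Ahat. norm (S j x - z) < \<eta> \<and> norm (F j x - fhat z) < \<eta>)"
    and j4: "\<forall>qv\<in>D. \<exists>x\<in>A. norm (S j x - uu qv) < \<eta> \<and> norm (F j x - fhat (uu qv)) < \<eta>"
    by (rule ev_ex) blast
  have l: "lam j > 0" by (rule lam_pos)
  from j2 obtain y where y: "y \<in> A" "norm (S j y - b) < min 1 (\<eta>/2)" by blast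
  define r where "r = (norm b + 1) * lam j"
  have r0: "r > 0" using l NB by (simp add: r_def)
  have "lam j < \<delta>p / (norm b + 1)" using j1 by simp
  then have rp: "r < \<delta>p" using NB by (simp add: r_def field_simps)
  have "norm (S j y) \<le> norm b + norm (S j y - b)" by (rule tri2) simp
  then have "norm (S j y) < norm b + 1" using y(2) by simp
  then have "norm (y - a) / lam j < norm b + 1" by (simp add: normS)
  then have "dist y a < r" using l by (simp add: r_def dist_norm field_simps)
  then have "ball y ((1 / Suc h) * r) \<inter> E \<noteq> {}" using \<delta>p(2) r0 rp y(1) by blast
  then obtain z where zb: "dist y z < (1 / Suc h) * r" and zE: "z \<in> E" by auto
  have zA: "z \<in> A" and zng: "\<not> good A f z (lam j) D e R"
    using zE j1 l by (auto simp: E_def Eset_def)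
  define w where "w = S j z"
  have "norm (S j z - S j y) = norm (z - y) / lam j" using l by (simp add: S_diff)
  also have "\<dots> < (1 / Suc h) * r / lam j"
  proof -
    have "norm (z - y) < (1 / Suc h) * r" using zb by (simp add: dist_norm norm_minus_commute)
    then show ?thesis using l by (rule divide_strict_right_mono)
  qed
  also have "\<dots> = (1 / Suc h) * (norm b + 1)" using l by (simp add: r_def)
  finally have "norm (S j z - S j y) < \<eta> / 2" using h by linarith
  moreover have "norm (w - b) \<le> norm (S j z - S j y) + norm (S j y - b)" by (rule tri2) (simp add: w_def)
  ultimately have wb: "norm (w - b) < \<eta>" using y(2) by simp
  have "norm (S j z) \<le> norm b + norm (w - b)" by (rule tri2) (simp add: w_def)
  then have "norm (S j z) \<le> R1" using wb \<eta>1 e R by (simp add: R1_def)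
  then obtain zh where zh: "zh \<in> Ahat" "norm (w - zh) < \<eta>" "norm (F j z - fhat zh) < \<eta>"
    using j3 zA by (auto simp: w_def)
  have "norm (zh - b) \<le> norm (zh - w) + norm (w - b)" by (rule tri2) simp
  then have "norm (zh - b) < 2 * \<eta>" using zh(2) wb by (simp add: norm_minus_commute)
  then have "L * norm (zh - b) \<le> L * (2 * \<eta>)" using L0 by (intro mult_left_mono) auto
  then have fb: "norm (fhat zh - fhat b) \<le> e / 8" using fhat_lip[OF zh(1) bA] \<eta>2 by linarith
  have est: "norm (S j x - S j z - q) < e - \<theta> \<and> norm (F j x - F j z - v) < e - \<theta>"
    if "norm (S j x - u) < \<eta>" "norm (F j x - fhat u) < \<eta>" "norm (u - b - q) < \<tau>" "norm (fhat u - fhat b - v) < \<tau>"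
    for x u q v
  proof
    have "norm (S j x - S j z - q) \<le> norm (S j x - u) + norm (u - b - q) + norm (b - w)"
      by (rule tri3) (simp add: w_def)
    also have "\<dots> < \<eta> + \<tau> + \<eta>" using that wb by (simp add: norm_minus_commute)
    finally show "norm (S j x - S j z - q) < e - \<theta>" using \<eta>1 e by (simp add: \<tau>_def \<theta>_def)
  next
    have "norm (F j x - F j z - v) \<le> norm (F j x - fhat u) + norm (fhat zh - F j z) + norm (fhat b - fhat zh) + norm (fhat u - fhat b - v)"
      by (rule tri4) simp
    also have "\<dots> < \<eta> + \<eta> + e/8 + \<tau>" using that zh(3) fb by (simp add: norm_minus_commute)
    finally show "norm (F j x - F j z - v) < e - \<theta>" using \<eta>1 e by (simp add: \<tau>_def \<theta>_def)
  qed
  have "good A f z (lam j) D e R"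
    unfolding good_def
  proof (intro exI[of _ \<theta>] conjI ballI impI)
    show "\<theta> > 0" using e by (simp add: \<theta>_def)
  next
    fix x assume xA: "x \<in> A" and nx: "norm (x - z) \<le> (R + \<theta>) * lam j"
    have nsw: "norm (S j x - w) \<le> R + \<theta>"
    proof -
      have "norm (S j x - w) = norm (x - z) / lam j" unfolding w_def S_diff using l by simp
      then show ?thesis using nx l by (simp add: pos_divide_le_eq)
    qed
    have "norm (S j x) \<le> norm (S j x - w) + norm (w - b) + norm b" by (rule tri3) simp
    then have "norm (S j x) \<le> R1" using nsw wb \<eta>1 e by (simp add: R1_def \<theta>_def)
    then obtain u where u: "u \<in> Ahat" "norm (S j x - u) < \<eta>" "norm (F j x - fhat u) < \<eta>"
      using j3 xA by blast
    have "norm (u - b) \<le> norm (u - S j x) + norm (S j x - w) + norm (w - b)" by (rule tri3) simp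
    then have "norm (u - b) \<le> R + 1" using u(2) nsw wb \<eta>1 e by (simp add: norm_minus_commute \<theta>_def)
    then obtain qv where qv: "qv \<in> D" "norm (u - b - fst qv) < \<tau>" "norm (fhat u - fhat b - snd qv) < \<tau>"
      using D2 u(1) by (auto simp: \<tau>_def)
    have "norm (S j x - S j z - fst qv) < e - \<theta> \<and> norm (F j x - F j z - snd qv) < e - \<theta>"
      using est[OF u(2,3) qv(2,3)] .
    then show "\<exists>qv\<in>D. norm ((1 / lam j) *\<^sub>R (x - z) - fst qv) < e - \<theta> \<and> norm ((1 / lam j) *\<^sub>R (f x - f z) - snd qv) < e - \<theta>"
      using qv(1) by (auto simp: S_diff F_diff)
  next
    fix qv assume qv: "qv \<in> D"
    then obtain x where x: "x \<in> A" "norm (S j x - uu qv) < \<eta>" "norm (F j x - fhat (uu qv)) < \<eta>"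
      using j4 by blast
    have "norm (S j x - S j z - fst qv) < e - \<theta> \<and> norm (F j x - F j z - snd qv) < e - \<theta>"
      using est[OF x(2,3)] uu qv by blast
    then show "\<exists>x\<in>A. norm ((1 / lam j) *\<^sub>R (x - z) - fst qv) < e - \<theta> \<and> norm ((1 / lam j) *\<^sub>R (f x - f z) - snd qv) < e - \<theta>"
      using x(1) by (auto simp: S_diff F_diff)
  qed
  then show False using zng by contradiction
qed

end

lemma div8: "0 \<le> (x::real) \<Longrightarrow> x / 8 \<le> x" by linarith

lemma lim_inv_Suc: "(\<lambda>k. 1 / real (Suc k)) \<longlonglongrightarrow> 0"
  using LIMSEQ_Suc[OF lim_1_over_n] by simp

lemma ev_ge_nat: "eventually (\<lambda>k. c \<le> real k) sequentially"
proof -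
  obtain n :: nat where "c \<le> real n" using real_arch_simple by blast
  then show ?thesis unfolding eventually_sequentially
    by (intro exI[of _ n] allI impI) (meson of_nat_le_iff order_trans)
qed

context tsetup begin

lemma conclude:
  fixes b :: 'a and r :: "nat \<Rightarrow> real" and D :: "nat \<Rightarrow> ('a \<times> 'b) set"
  assumes bA: "b \<in> Ahat"
   and r0: "\<And>k. 0 < r k" and r1: "\<And>k. r k < 1 / Suc k"
   and g: "\<And>k. good A f a (r k) (D k) (1 / Suc k) (real k)"
   and D1: "\<And>k. \<forall>qv\<in>D k. \<exists>u\<in>Ahat. norm (u - b - fst qv) < (1 / Suc k) / 8 \<and> norm (fhat u - fhat b - snd qv) < (1 / Suc k) / 8"
   and D2: "\<And>k. \<forall>u\<in>Ahat. norm (u - b) \<le> real k + 1 \<longrightarrow> (\<exists>qv\<in>D k. norm (u - b - fst qv) < (1 / Suc k) / 8 \<and> norm (fhat u - fhat b - snd qv) < (1 / Suc k) / 8)"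
  shows "intrinsic_tangent A f a ((\<lambda>x. x - b) ` Ahat) (\<lambda>x. fhat (x + b) - fhat b)"
  unfolding intrinsic_tangent_def
proof (intro exI[of _ r] conjI allI impI)
  show "0 < r j" for j by (rule r0)
  show "r \<longlonglongrightarrow> 0"
  proof (rule tendsto_sandwich[OF _ _ tendsto_const lim_inv_Suc])
    show "eventually (\<lambda>k. 0 \<le> r k) sequentially" using r0 by (simp add: less_imp_le)
    show "eventually (\<lambda>k. r k \<le> 1 / real (Suc k)) sequentially" using r1 by (simp add: less_imp_le)
  qed
next
  define Ah where "Ah = (\<lambda>x. x - b) ` Ahat"
  have bound: "dR R ((\<lambda>y. (1 / r k) *\<^sub>R (y - a)) ` A) Ah \<le> ennreal (2 / Suc k)"
    if R: "R \<le> real k" for R k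
  proof -
    obtain \<theta> where th: "\<theta> > 0"
      and g1: "\<forall>x\<in>A. norm (x - a) \<le> (real k + \<theta>) * r k \<longrightarrow>
        (\<exists>qv\<in>D k. norm ((1/r k) *\<^sub>R (x - a) - fst qv) < 1 / Suc k - \<theta> \<and> norm ((1/r k) *\<^sub>R (f x - f a) - snd qv) < 1 / Suc k - \<theta>)"
      and g2: "\<forall>qv\<in>D k. \<exists>x\<in>A. norm ((1/r k) *\<^sub>R (x - a) - fst qv) < 1 / Suc k - \<theta> \<and> norm ((1/r k) *\<^sub>R (f x - f a) - snd qv) < 1 / Suc k - \<theta>"
      using g[of k] unfolding good_def by blast
    have rk: "r k > 0" by (rule r0)
    show ?thesis
    proof (rule dR_le)
      fix p assume p: "p \<in> (\<lambda>y. (1 / r k) *\<^sub>R (y - a)) ` A" and np: "norm p < R"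
      then obtain x where x: "x \<in> A" "p = (1 / r k) *\<^sub>R (x - a)" by blast
      have "norm p = norm (x - a) / r k" using x(2) rk by simp
      then have "norm (x - a) = r k * norm p" using rk by (simp add: field_simps)
      also have "\<dots> \<le> r k * (real k + \<theta>)" using np R th rk by (intro mult_left_mono) auto
      finally have "norm (x - a) \<le> (real k + \<theta>) * r k" by (simp add: mult.commute)
      then obtain qv where qv: "qv \<in> D k" "norm (p - fst qv) < 1 / Suc k - \<theta>"
        using g1 x by blast
      obtain u where u: "u \<in> Ahat" "norm (u - b - fst qv) < (1 / Suc k) / 8" using D1[of k] qv(1) by blast
      have "u - b \<in> Ah" using u(1) by (auto simp: Ah_def)
      then have ee: "edist_set p Ah \<le> ennreal (dist p (u - b))" by (rule edist_set_le)
      have "dist p (u - b) \<le> norm (p - fst qv) + norm (-(u - b - fst qv))"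
        unfolding dist_norm by (rule tri2) (simp add: algebra_simps)
      moreover have "norm (p - fst qv) < 1 / real (Suc k)" using qv(2) th by linarith
      moreover have "norm (-(u - b - fst qv)) < 1 / real (Suc k) / 8" using u(2) by (simp only: norm_minus_cancel)
      moreover have "1 / real (Suc k) / 8 \<le> 1 / real (Suc k)" by (rule div8) simp
      moreover have "2 / real (Suc k) = 2 * (1 / real (Suc k))" by simp
      ultimately have "dist p (u - b) \<le> 2 / Suc k" by linarith
      then show "edist_set p Ah \<le> ennreal (2 / Suc k)" using ee by (meson ennreal_leI order_trans)
    next
      fix x' assume x': "x' \<in> Ah" and nx: "norm x' < R"
      then obtain u where u: "u \<in> Ahat" "x' = u - b" by (auto simp: Ah_def)
      have "norm (u - b) \<le> real k + 1" using nx R u(2) by simp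
      then obtain qv where qv: "qv \<in> D k" "norm (u - b - fst qv) < (1 / Suc k) / 8"
        using D2[of k] u(1) by blast
      obtain x where x: "x \<in> A" "norm ((1/r k) *\<^sub>R (x - a) - fst qv) < 1 / Suc k - \<theta>"
        using g2 qv(1) by blast
      have ee: "edist_set x' ((\<lambda>y. (1 / r k) *\<^sub>R (y - a)) ` A) \<le> ennreal (dist x' ((1/r k) *\<^sub>R (x - a)))"
        using x(1) by (intro edist_set_le) auto
      have "dist x' ((1/r k) *\<^sub>R (x - a)) \<le> norm (u - b - fst qv) + norm (-((1/r k) *\<^sub>R (x - a) - fst qv))"
        unfolding dist_norm u(2) by (rule tri2) (simp add: algebra_simps)
      moreover have "norm (-((1/r k) *\<^sub>R (x - a) - fst qv)) < 1 / real (Suc k)" using x(2) th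
        unfolding norm_minus_cancel by linarith
      moreover have "1 / real (Suc k) / 8 \<le> 1 / real (Suc k)" by (rule div8) simp
      moreover have "2 / real (Suc k) = 2 * (1 / real (Suc k))" by simp
      ultimately have "dist x' ((1/r k) *\<^sub>R (x - a)) \<le> 2 / Suc k" using qv(2) by linarith
      then show "edist_set x' ((\<lambda>y. (1 / r k) *\<^sub>R (y - a)) ` A) \<le> ennreal (2 / Suc k)"
        using ee by (meson ennreal_leI order_trans)
    qed
  qed
  show "pointed_hausdorff_conv (\<lambda>j. (\<lambda>y. (1 / r j) *\<^sub>R (y - a)) ` A) ((\<lambda>x. x - b) ` Ahat)"
    unfolding pointed_hausdorff_conv_def Ah_def[symmetric]
  proof (intro conjI allI impI)
    show "closed Ah" unfolding Ah_def by (rule closed_translation_subtract[OF closedAhat])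
    fix R :: real assume "R > 0"
    have lim2: "(\<lambda>k. ennreal (2 / real (Suc k))) \<longlonglongrightarrow> 0"
    proof -
      have "(\<lambda>k. ennreal (2 / real (Suc k))) \<longlonglongrightarrow> ennreal 0"
        using tendsto_mult[OF tendsto_const[of 2] lim_inv_Suc] by (intro tendsto_ennrealI) simp
      then show ?thesis by (simp only: ennreal_0)
    qed
    show "(\<lambda>j. dR R ((\<lambda>y. (1 / r j) *\<^sub>R (y - a)) ` A) Ah) \<longlonglongrightarrow> 0"
    proof (rule tendsto_sandwich[OF _ _ tendsto_const lim2])
      show "eventually (\<lambda>k. 0 \<le> dR R ((\<lambda>y. (1 / r k) *\<^sub>R (y - a)) ` A) Ah) sequentially" by simp
      show "eventually (\<lambda>k. dR R ((\<lambda>y. (1 / r k) *\<^sub>R (y - a)) ` A) Ah \<le> ennreal (2 / real (Suc k))) sequentially"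
        using ev_ge_nat[of R] by (rule eventually_mono) (rule bound)
    qed
  qed
next
  fix xs x'
  assume xsA: "\<forall>j. xs j \<in> A" and x': "x' \<in> (\<lambda>x. x - b) ` Ahat"
    and conv: "(\<lambda>j. (1 / r j) *\<^sub>R (xs j - a)) \<longlonglongrightarrow> x'"
  obtain u0 where u0: "u0 \<in> Ahat" "x' = u0 - b" using x' by blast
  show "(\<lambda>j. (1 / r j) *\<^sub>R (f (xs j) - f a)) \<longlonglongrightarrow> fhat (x' + b) - fhat b"
    unfolding tendsto_iff u0(2)
  proof (intro allI impI)
    fix \<rho> :: real assume \<rho>: "\<rho> > 0"
    define L1 where "L1 = L + 1"
    have L1: "L1 > 0" "L \<le> L1" using L0 by (auto simp: L1_def)
    have c1: "min 1 (\<rho> / (2 * L1)) > 0" using \<rho> L1 by simp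
    have e1: "eventually (\<lambda>k. dist ((1 / r k) *\<^sub>R (xs k - a)) x' < min 1 (\<rho> / (2 * L1))) sequentially"
      using conv c1 unfolding tendsto_iff by blast
    have e2: "eventually (\<lambda>k. norm x' + 1 \<le> real k) sequentially" by (rule ev_ge_nat)
    have e3: "eventually (\<lambda>k. 1 / real (Suc k) < \<rho> / (8 * L1)) sequentially"
      using lim_inv_Suc \<rho> L1 by (intro order_tendstoD(2)) auto
    have "eventually (\<lambda>k. dist ((1 / r k) *\<^sub>R (xs k - a)) x' < min 1 (\<rho> / (2 * L1)) \<and>
       norm x' + 1 \<le> real k \<and> 1 / real (Suc k) < \<rho> / (8 * L1)) sequentially"
      using e1 e2 e3 by (intro eventually_conj)
    then show "eventually (\<lambda>k. dist ((1 / r k) *\<^sub>R (f (xs k) - f a)) (fhat (u0 - b + b) - fhat b) < \<rho>) sequentially"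
    proof (rule eventually_mono)
      fix k
      assume kk: "dist ((1 / r k) *\<^sub>R (xs k - a)) x' < min 1 (\<rho> / (2 * L1)) \<and>
       norm x' + 1 \<le> real k \<and> 1 / real (Suc k) < \<rho> / (8 * L1)"
      then have k1: "dist ((1 / r k) *\<^sub>R (xs k - a)) x' < min 1 (\<rho> / (2 * L1))"
        and k2: "norm x' + 1 \<le> real k" and k3: "1 / real (Suc k) < \<rho> / (8 * L1)" by auto
      define ep where "ep = 1 / real (Suc k)"
      define p where "p = (1 / r k) *\<^sub>R (xs k - a)"
      define d where "d = norm (p - x')"
      have d: "d < 1" "d < \<rho> / (2 * L1)" "d \<ge> 0" using k1 by (auto simp: d_def p_def dist_norm)
      have rk: "r k > 0" by (rule r0)
      obtain \<theta> where th: "\<theta> > 0"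
        and g1: "\<forall>x\<in>A. norm (x - a) \<le> (real k + \<theta>) * r k \<longrightarrow>
          (\<exists>qv\<in>D k. norm ((1/r k) *\<^sub>R (x - a) - fst qv) < 1 / Suc k - \<theta> \<and> norm ((1/r k) *\<^sub>R (f x - f a) - snd qv) < 1 / Suc k - \<theta>)"
        using g[of k] unfolding good_def by blast
      have "norm p \<le> norm x' + norm (p - x')" by (rule tri2) simp
      then have np: "norm p \<le> real k" using d k2 by (simp add: d_def)
      have "norm p = norm (xs k - a) / r k" using rk by (simp add: p_def)
      then have "norm (xs k - a) = r k * norm p" using rk by (simp add: field_simps)
      also have "\<dots> \<le> r k * (real k + \<theta>)" using np th rk by (intro mult_left_mono) auto
      finally have "norm (xs k - a) \<le> (real k + \<theta>) * r k" by (simp add: mult.commute)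
      then obtain qv where qv: "qv \<in> D k" "norm (p - fst qv) < ep"
          "norm ((1/r k) *\<^sub>R (f (xs k) - f a) - snd qv) < ep"
        using g1 xsA th by (force simp: p_def ep_def)
      obtain u where u: "u \<in> Ahat" "norm (u - b - fst qv) < ep / 8" "norm (fhat u - fhat b - snd qv) < ep / 8"
        using D1[of k] qv(1) unfolding ep_def by blast
      have "norm (u - u0) \<le> norm (u - b - fst qv) + norm (fst qv - p) + norm (p - x')"
        by (rule tri3) (simp add: u0(2))
      moreover have "norm (u - b - fst qv) < ep" using u(2) norm_ge_zero[of "u - b - fst qv"] by linarith
      moreover have "norm (fst qv - p) = norm (p - fst qv)" by (rule norm_minus_commute)
      ultimately have nu: "norm (u - u0) \<le> 2 * ep + d" using qv(2) unfolding d_def by linarith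
      have "L * norm (u - u0) \<le> L * (2 * ep + d)" using nu L0 by (rule mult_left_mono)
      moreover have "norm ((1/r k) *\<^sub>R (f (xs k) - f a) - (fhat u0 - fhat b)) \<le>
          norm ((1/r k) *\<^sub>R (f (xs k) - f a) - snd qv) + norm (snd qv - (fhat u - fhat b)) + norm (fhat u - fhat u0)"
        by (rule tri3) simp
      moreover have "norm (fhat u - fhat u0) \<le> L * norm (u - u0)" by (rule fhat_lip[OF u(1) u0(1)])
      moreover have "norm (snd qv - (fhat u - fhat b)) < ep"
        using u(3) norm_ge_zero[of "fhat u - fhat b - snd qv"] norm_minus_commute[of "snd qv" "fhat u - fhat b"] by linarith
      moreover have "L * (2 * ep + d) \<le> L1 * (2 * ep) + L1 * d"
      proof -
        have "0 \<le> 2 * ep + d" using d(3) by (simp add: ep_def)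
        then have "L * (2 * ep + d) \<le> L1 * (2 * ep + d)" using L1(2) by (intro mult_right_mono)
        then show ?thesis by (simp add: algebra_simps)
      qed
      moreover have "L1 * ep < \<rho> / 8" using k3 L1 by (simp add: ep_def field_simps)
      moreover have "L1 * d < \<rho> / 2" using d(2) L1 by (simp add: field_simps)
      moreover have "ep \<le> L1 * ep"
      proof -
        have "1 \<le> L1" "0 \<le> ep" using L0 by (auto simp: L1_def ep_def)
        then have "1 * ep \<le> L1 * ep" by (intro mult_right_mono)
        then show ?thesis by simp
      qed
      ultimately have "norm ((1/r k) *\<^sub>R (f (xs k) - f a) - (fhat u0 - fhat b)) < \<rho>"
        using qv(3) by linarith
      then show "dist ((1 / r k) *\<^sub>R (f (xs k) - f a)) (fhat (u0 - b + b) - fhat b) < \<rho>"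
        by (simp add: dist_norm)
    qed
  qed
qed

end

context tsetup begin

lemma main_tan:
  assumes bA: "b \<in> Ahat"
    and Q1: "\<And>X. open X \<Longrightarrow> X \<noteq> {} \<Longrightarrow> \<exists>d\<in>Q1. d \<in> X"
    and Q2: "\<And>X. open X \<Longrightarrow> X \<noteq> {} \<Longrightarrow> \<exists>d\<in>Q2. d \<in> X"
    and NP: "\<And>D k h. finite D \<Longrightarrow> D \<subseteq> Q1 \<times> Q2 \<Longrightarrow> a \<in> Eset A f D (1 / Suc k) (real k) (1 / Suc k) \<Longrightarrow>
        \<exists>\<delta>>0. \<forall>r. 0 < r \<longrightarrow> r < \<delta> \<longrightarrow> (\<forall>y\<in>A. dist y a < r \<longrightarrow>
           ball y ((1 / Suc h) * r) \<inter> Eset A f D (1 / Suc k) (real k) (1 / Suc k) \<noteq> {})"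
  shows "intrinsic_tangent A f a ((\<lambda>x. x - b) ` Ahat) (\<lambda>x. fhat (x + b) - fhat b)"
proof -
  have ex: "\<exists>Dr. finite (fst Dr) \<and>
      (\<forall>qv\<in>fst Dr. \<exists>u\<in>Ahat. norm (u - b - fst qv) < (1 / Suc k) / 8 \<and> norm (fhat u - fhat b - snd qv) < (1 / Suc k) / 8) \<and>
      (\<forall>u\<in>Ahat. norm (u - b) \<le> real k + 1 \<longrightarrow> (\<exists>qv\<in>fst Dr. norm (u - b - fst qv) < (1 / Suc k) / 8 \<and> norm (fhat u - fhat b - snd qv) < (1 / Suc k) / 8)) \<and>
      0 < snd Dr \<and> snd Dr < 1 / Suc k \<and> good A f a (snd Dr) (fst Dr) (1 / Suc k) (real k)" for k :: nat
  proof -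
    define K where "K = Ahat \<inter> cball b (real k + 1)"
    have cK: "compact K" unfolding K_def using closedAhat by (intro closed_Int_compact) auto
    have Glip: "norm ((fhat u - fhat b) - (fhat u' - fhat b)) \<le> L * norm (u - u')" if "u \<in> K" "u' \<in> K" for u u'
      using fhat_lip[of u u'] that by (simp add: K_def)
    have tau: "(1 / real (Suc k)) / 8 > 0" by simp
    have "\<exists>D. finite D \<and> D \<subseteq> Q1 \<times> Q2 \<and>
      (\<forall>qv\<in>D. \<exists>u\<in>K. norm (u - b - fst qv) < (1 / Suc k) / 8 \<and> norm ((fhat u - fhat b) - snd qv) < (1 / Suc k) / 8) \<and>
      (\<forall>u\<in>K. \<exists>qv\<in>D. norm (u - b - fst qv) < (1 / Suc k) / 8 \<and> norm ((fhat u - fhat b) - snd qv) < (1 / Suc k) / 8)"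
      using finite_approx[OF cK _ L0 tau, of "\<lambda>u. fhat u - fhat b" Q1 Q2 b] Glip Q1 Q2 by blast
    then obtain D where D: "finite D" "D \<subseteq> Q1 \<times> Q2"
      "\<forall>qv\<in>D. \<exists>u\<in>K. norm (u - b - fst qv) < (1 / Suc k) / 8 \<and> norm ((fhat u - fhat b) - snd qv) < (1 / Suc k) / 8"
      "\<forall>u\<in>K. \<exists>qv\<in>D. norm (u - b - fst qv) < (1 / Suc k) / 8 \<and> norm ((fhat u - fhat b) - snd qv) < (1 / Suc k) / 8"
      by blast
    have D1: "\<forall>qv\<in>D. \<exists>u\<in>Ahat. norm (u - b - fst qv) < (1 / Suc k) / 8 \<and> norm (fhat u - fhat b - snd qv) < (1 / Suc k) / 8"
      using D(3) unfolding K_def by blast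
    have D2: "\<forall>u\<in>Ahat. norm (u - b) \<le> real k + 1 \<longrightarrow> (\<exists>qv\<in>D. norm (u - b - fst qv) < (1 / Suc k) / 8 \<and> norm (fhat u - fhat b - snd qv) < (1 / Suc k) / 8)"
    proof (intro ballI impI)
      fix u assume "u \<in> Ahat" "norm (u - b) \<le> real k + 1"
      then have "u \<in> K" by (simp add: K_def dist_norm norm_minus_commute)
      then show "\<exists>qv\<in>D. norm (u - b - fst qv) < (1 / Suc k) / 8 \<and> norm (fhat u - fhat b - snd qv) < (1 / Suc k) / 8"
        using D(4) by blast
    qed
    have "\<exists>r. 0 < r \<and> r < 1 / Suc k \<and> good A f a r D (1 / Suc k) (real k)"
    proof (rule step_k[OF bA D(1)])
      show "0 < 1 / real (Suc k)" "1 / real (Suc k) \<le> 1" "0 \<le> real k" "0 < 1 / real (Suc k)" by auto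
      show "\<forall>qv\<in>D. \<exists>u\<in>Ahat. norm (u - b - fst qv) < 1 / real (Suc k) / 8 \<and> norm (fhat u - fhat b - snd qv) < 1 / real (Suc k) / 8"
        by (rule D1)
      show "\<forall>u\<in>Ahat. norm (u - b) \<le> real k + 1 \<longrightarrow> (\<exists>qv\<in>D. norm (u - b - fst qv) < 1 / real (Suc k) / 8 \<and> norm (fhat u - fhat b - snd qv) < 1 / real (Suc k) / 8)"
        by (rule D2)
      fix h :: nat
      assume "a \<in> Eset A f D (1 / real (Suc k)) (real k) (1 / real (Suc k))"
      then show "\<exists>\<delta>>0. \<forall>r. 0 < r \<longrightarrow> r < \<delta> \<longrightarrow> (\<forall>y\<in>A. dist y a < r \<longrightarrow>
           ball y ((1 / Suc h) * r) \<inter> Eset A f D (1 / real (Suc k)) (real k) (1 / real (Suc k)) \<noteq> {})"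
        using NP[OF D(1,2)] by blast
    qed
    then obtain r where "0 < r" "r < 1 / Suc k" "good A f a r D (1 / Suc k) (real k)" by blast
    then show ?thesis using D(1) D1 D2 by (intro exI[of _ "(D, r)"]) simp
  qed
  then obtain Dr where Dr: "\<And>k. finite (fst (Dr k)) \<and>
      (\<forall>qv\<in>fst (Dr k). \<exists>u\<in>Ahat. norm (u - b - fst qv) < (1 / Suc k) / 8 \<and> norm (fhat u - fhat b - snd qv) < (1 / Suc k) / 8) \<and>
      (\<forall>u\<in>Ahat. norm (u - b) \<le> real k + 1 \<longrightarrow> (\<exists>qv\<in>fst (Dr k). norm (u - b - fst qv) < (1 / Suc k) / 8 \<and> norm (fhat u - fhat b - snd qv) < (1 / Suc k) / 8)) \<and>
      0 < snd (Dr k) \<and> snd (Dr k) < 1 / Suc k \<and> good A f a (snd (Dr k)) (fst (Dr k)) (1 / Suc k) (real k)"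
    by metis
  show ?thesis
    by (rule conclude[OF bA, of "\<lambda>k. snd (Dr k)" "\<lambda>k. fst (Dr k)"]) (use Dr in auto)
qed

end

theorem proposition2p5:
  fixes A :: "(real ^ 'n) set" and f :: "real ^ 'n \<Rightarrow> real ^ 'm" and \<mu> :: "(real ^ 'n) measure"
  assumes "closed A"
    and "doubling_measure_on A \<mu>"
    and "\<exists>L. L-lipschitz_on A f"
  shows "AE a in \<mu>. a \<in> A \<longrightarrow>
           (\<forall>Ahat fhat. intrinsic_tangent A f a Ahat fhat \<longrightarrow>
              (\<forall>b\<in>Ahat. intrinsic_tangent A f a ((\<lambda>x. x - b) ` Ahat) (\<lambda>x. fhat (x + b) - fhat b)))"
proof -
  obtain L where lip: "L-lipschitz_on A f" using assms(3) by blast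
  obtain Q1 :: "(real ^ 'n) set" where Q1: "countable Q1" "\<And>X. open X \<Longrightarrow> X \<noteq> {} \<Longrightarrow> \<exists>d\<in>Q1. d \<in> X"
    using countable_dense_setE by blast
  obtain Q2 :: "(real ^ 'm) set" where Q2: "countable Q2" "\<And>X. open X \<Longrightarrow> X \<noteq> {} \<Longrightarrow> \<exists>d\<in>Q2. d \<in> X"
    using countable_dense_setE by blast
  define I where "I = {D. finite D \<and> D \<subseteq> Q1 \<times> Q2} \<times> (UNIV :: (nat \<times> nat) set)"
  have cI: "countable I" unfolding I_def
    using Q1(1) Q2(1) by (intro countable_SIGMA countable_Collect_finite_subset) auto
  define EE where "EE D k = Eset A f D (1 / real (Suc k)) (real k) (1 / real (Suc k))" for D k
  define P where "P i a = (a \<in> EE (fst i) (fst (snd i)) \<longrightarrow> (\<exists>\<delta>>0. \<forall>r. 0 < r \<longrightarrow> r < \<delta> \<longrightarrow>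
       (\<forall>y\<in>A. dist y a < r \<longrightarrow> ball y ((1 / Suc (snd (snd i))) * r) \<inter> EE (fst i) (fst (snd i)) \<noteq> {})))" for i a
  have "\<forall>i\<in>I. AE a in \<mu>. P i a"
  proof
    fix i assume "i \<in> I"
    have cl: "closed (EE (fst i) (fst (snd i)))" unfolding EE_def by (rule Eset_closed[OF assms(1) lip])
    have sub: "EE (fst i) (fst (snd i)) \<subseteq> A" by (auto simp: EE_def Eset_def)
    show "AE a in \<mu>. P i a"
      unfolding P_def by (rule porous_null[OF assms(2) cl sub]) auto
  qed
  then have "AE a in \<mu>. \<forall>i\<in>I. P i a" using cI by (simp add: AE_ball_countable)
  then show ?thesis
  proof (rule eventually_mono)
    fix a assume H: "\<forall>i\<in>I. P i a"
    show "a \<in> A \<longrightarrow> (\<forall>Ahat fhat. intrinsic_tangent A f a Ahat fhat \<longrightarrow>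
              (\<forall>b\<in>Ahat. intrinsic_tangent A f a ((\<lambda>x. x - b) ` Ahat) (\<lambda>x. fhat (x + b) - fhat b)))"
    proof (intro impI allI ballI)
      fix Ahat fhat b assume aA: "a \<in> A" and T: "intrinsic_tangent A f a Ahat fhat" and bA: "b \<in> Ahat"
      obtain lam where lam: "\<forall>j. lam j > 0" "lam \<longlonglongrightarrow> 0"
        "pointed_hausdorff_conv (\<lambda>j. (\<lambda>y. (1 / lam j) *\<^sub>R (y - a)) ` A) Ahat"
        "\<forall>xs x. (\<forall>j. xs j \<in> A) \<longrightarrow> x \<in> Ahat \<longrightarrow>
            (\<lambda>j. (1 / lam j) *\<^sub>R (xs j - a)) \<longlonglongrightarrow> x \<longrightarrow>
            (\<lambda>j. (1 / lam j) *\<^sub>R (f (xs j) - f a)) \<longlonglongrightarrow> fhat x"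
        using T unfolding intrinsic_tangent_def by blast
      interpret tsetup A f a L lam Ahat fhat
        using aA lip lam by unfold_locales auto
      show "intrinsic_tangent A f a ((\<lambda>x. x - b) ` Ahat) (\<lambda>x. fhat (x + b) - fhat b)"
      proof (rule main_tan[OF bA Q1(2) Q2(2)])
        fix D k h assume D: "finite D" "D \<subseteq> Q1 \<times> Q2" and aE: "a \<in> Eset A f D (1 / real (Suc k)) (real k) (1 / real (Suc k))"
        have "(D, (k, h)) \<in> I" using D by (simp add: I_def)
        then have "P (D, (k, h)) a" using H by blast
        then show "\<exists>\<delta>>0. \<forall>r. 0 < r \<longrightarrow> r < \<delta> \<longrightarrow> (\<forall>y\<in>A. dist y a < r \<longrightarrow>
           ball y ((1 / real (Suc h)) * r) \<inter> Eset A f D (1 / real (Suc k)) (real k) (1 / real (Suc k)) \<noteq> {})"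
          using aE by (simp add: P_def EE_def)
      qed
    qed
  qed
qed

end
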